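(* A point $(\bar x,\bar y)\in X\times Y$ is a calm local minimax point of $\min_{x\in X}\max_{y\in Y}f(x,y)$ if and only if there exist $\delta_0>0$ and a radius function $\tau$ such that (1) for every $\delta\in(0,\delta_0]$, $x\in X\cap\mathbb{B}_\delta(\bar x)$ and $y\in Y\cap\mathbb{B}_\delta(\bar y)$: $f(\bar x,y)\le f(\bar x,\bar y)\le\max_{y'\in Y\cap\mathbb{B}_{\tau(\|x-\bar x\|)}(\bar y)}f(x,y')$ (so in particular $(\bar x,\bar y)$ is a local minimax point), and (2) the optimal solution mapping $S_{\tau}(x):=\operatorname{argmax}_{y\in Y\cap\mathbb{B}_{\tau(\|x-\bar x\|)}(\bar y)}f(x,y)$ is inner calm at $(\bar x,\bar y)$ with respect to $X$.
   Context: $X\subseteq\mathbb{R}^n$, $Y\subseteq\mathbb{R}^m$ are nonempty closed sets and $f:\mathbb{R}^n\times\mathbb{R}^m\to\mathbb{R}$. $\mathbb{B}_\epsilon(z)$ is the closed Euclidean ball, $\mathbb{B}$ the closed unit ball. Standing assumption: for every $x\in X$, every $\bar y\in Y$ and every $\epsilon\ge0$ the maximum of $f(x,\cdot)$ over $Y\cap\mathbb{B}_\epsilon(\bar y)$ is attained. A radius function is a map $\tau:[0,\infty)\to[0,\infty)$ with $\tau(0)=0$ and $\tau(\delta)\to0$ as $\delta\downarrow0$; it is calm at $0$ if there exist $\kappa>0$, $\delta_1>0$ with $\tau(\delta)\le\kappa\delta$ for all $\delta\in[0,\delta_1]$. $(\bar x,\bar y)\in X\times Y$ is a local minimax point if there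 exist $\delta_0>0$ and a radius function $\tau$ such that for all $\delta\in(0,\delta_0]$, $x\in X\cap\mathbb{B}_\delta(\bar x)$, $y\in Y\cap\mathbb{B}_\delta(\bar y)$: $f(\bar x,y)\le f(\bar x,\bar y)\le\max_{y'\in Y\cap\mathbb{B}_{\tau(\delta)}(\bar y)}f(x,y')$; it is a calm local minimax point if this holds with $\tau$ calm at $0$. A set-valued map $\Gamma:\mathbb{R}^n\rightrightarrows\mathbb{R}^m$ with $\bar y\in\Gamma(\bar x)$ is inner calm at $(\bar x,\bar y)$ with respect to $X$ if there exist $\kappa>0$, $\delta_0>0$ such that $\bar y\in\Gamma(x)+\kappa\|x-\bar x\|\mathbb{B}$ for all $x\in\mathbb{B}_{\delta_0}(\bar x)\cap X$. *)

theory Defs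
  imports "HOL-Analysis.Analysis"
begin

definition radius_function :: "(real \<Rightarrow> real) \<Rightarrow> bool" where
  "radius_function \<tau> \<longleftrightarrow> (\<forall>d\<ge>0. \<tau> d \<ge> 0) \<and> \<tau> 0 = 0 \<and> (\<tau> \<longlongrightarrow> 0) (at_right 0)"

definition calm_at_0 :: "(real \<Rightarrow> real) \<Rightarrow> bool" where
  "calm_at_0 \<tau> \<longleftrightarrow> (\<exists>\<kappa>>0. \<exists>\<delta>1>0. \<forall>\<delta>\<in>{0..\<delta>1}. \<tau> \<delta> \<le> \<kappa> * \<delta>)"

text \<open>Maximum value of f x over S (attained under the standing assumption).\<close>
definition maxval :: "('a \<Rightarrow> 'b \<Rightarrow> real) \<Rightarrow> 'a \<Rightarrow> 'b set \<Rightarrow> real" where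
  "maxval f x S = (SUP y\<in>S. f x y)"

definition argmax_set :: "('a \<Rightarrow> 'b \<Rightarrow> real) \<Rightarrow> 'a \<Rightarrow> 'b set \<Rightarrow> 'b set" where
  "argmax_set f x S = {y \<in> S. \<forall>y'\<in>S. f x y' \<le> f x y}"

definition max_attained :: "'a::metric_space set \<Rightarrow> 'b::metric_space set \<Rightarrow> ('a \<Rightarrow> 'b \<Rightarrow> real) \<Rightarrow> bool" where
  "max_attained X Y f \<longleftrightarrow> (\<forall>x\<in>X. \<forall>yb\<in>Y. \<forall>\<epsilon>\<ge>0. argmax_set f x (Y \<inter> cball yb \<epsilon>) \<noteq> {})"

definition local_minimax_wrt ::
  "'a::metric_space set \<Rightarrow> 'b::metric_space set \<Rightarrow> ('a \<Rightarrow> 'b \<Rightarrow> real) \<Rightarrow> 'a \<Rightarrow> 'b \<Rightarrow> real \<Rightarrow> (real \<Rightarrow> real) \<Rightarrow> bool" where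
  "local_minimax_wrt X Y f xb yb \<delta>0 \<tau> \<longleftrightarrow>
     (\<forall>\<delta>\<in>{0<..\<delta>0}. \<forall>x\<in>X \<inter> cball xb \<delta>. \<forall>y\<in>Y \<inter> cball yb \<delta>.
        f xb y \<le> f xb yb \<and> f xb yb \<le> maxval f x (Y \<inter> cball yb (\<tau> \<delta>)))"

definition local_minimax_point ::
  "'a::metric_space set \<Rightarrow> 'b::metric_space set \<Rightarrow> ('a \<Rightarrow> 'b \<Rightarrow> real) \<Rightarrow> 'a \<Rightarrow> 'b \<Rightarrow> bool" where
  "local_minimax_point X Y f xb yb \<longleftrightarrow> xb \<in> X \<and> yb \<in> Y \<and>
     (\<exists>\<delta>0>0. \<exists>\<tau>. radius_function \<tau> \<and> local_minimax_wrt X Y f xb yb \<delta>0 \<tau>)"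

definition calm_local_minimax_point ::
  "'a::metric_space set \<Rightarrow> 'b::metric_space set \<Rightarrow> ('a \<Rightarrow> 'b \<Rightarrow> real) \<Rightarrow> 'a \<Rightarrow> 'b \<Rightarrow> bool" where
  "calm_local_minimax_point X Y f xb yb \<longleftrightarrow> xb \<in> X \<and> yb \<in> Y \<and>
     (\<exists>\<delta>0>0. \<exists>\<tau>. radius_function \<tau> \<and> calm_at_0 \<tau> \<and> local_minimax_wrt X Y f xb yb \<delta>0 \<tau>)"

definition inner_calm ::
  "('a::real_normed_vector \<Rightarrow> 'b::real_normed_vector set) \<Rightarrow> 'a \<Rightarrow> 'b \<Rightarrow> 'a set \<Rightarrow> bool" where
  "inner_calm \<Gamma> xb yb X \<longleftrightarrow> yb \<in> \<Gamma> xb \<and>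
     (\<exists>\<kappa>>0. \<exists>\<delta>0>0. \<forall>x\<in>cball xb \<delta>0 \<inter> X.
        yb \<in> {y + z | y z. y \<in> \<Gamma> x \<and> z \<in> cball 0 (\<kappa> * norm (x - xb))})"

end

theory Submission
  imports Defs
begin

lemma maxval_argmax:
  assumes "y \<in> argmax_set f x S"
  shows "maxval f x S = f x y"
  using assms unfolding maxval_def argmax_set_def
  by (intro cSup_eq_maximum) auto

theorem mainTheorem6:
  fixes X :: "'a::euclidean_space set" and Y :: "'b::euclidean_space set"
    and f :: "'a \<Rightarrow> 'b \<Rightarrow> real" and xb :: 'a and yb :: 'b
  assumes "closed X" and "closed Y" and "X \<noteq> {}" and "Y \<noteq> {}"
    and "max_attained X Y f"
    and "xb \<in> X" and "yb \<in> Y"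
  shows "calm_local_minimax_point X Y f xb yb \<longleftrightarrow>
    (\<exists>\<delta>0>0. \<exists>\<tau>. radius_function \<tau> \<and>
       (\<forall>\<delta>\<in>{0<..\<delta>0}. \<forall>x\<in>X \<inter> cball xb \<delta>. \<forall>y\<in>Y \<inter> cball yb \<delta>.
          f xb y \<le> f xb yb \<and>
          f xb yb \<le> maxval f x (Y \<inter> cball yb (\<tau> (norm (x - xb))))) \<and>
       inner_calm (\<lambda>x. argmax_set f x (Y \<inter> cball yb (\<tau> (norm (x - xb))))) xb yb X)"
proof
  assume "calm_local_minimax_point X Y f xb yb"
  then obtain \<delta>0 \<tau> where d0: "\<delta>0 > 0" and rf: "radius_function \<tau>" and cl: "calm_at_0 \<tau>"
    and lm: "local_minimax_wrt X Y f xb yb \<delta>0 \<tau>"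
    unfolding calm_local_minimax_point_def by blast
  from cl obtain \<kappa> \<delta>1 where k: "\<kappa> > 0" and d1: "\<delta>1 > 0" and hk: "\<forall>\<delta>\<in>{0..\<delta>1}. \<tau> \<delta> \<le> \<kappa> * \<delta>"
    unfolding calm_at_0_def by blast
  have t0: "\<tau> 0 = 0" and tpos: "\<And>d. d \<ge> 0 \<Longrightarrow> \<tau> d \<ge> 0" using rf unfolding radius_function_def by auto
  have P1: "\<forall>\<delta>\<in>{0<..\<delta>0}. \<forall>x\<in>X \<inter> cball xb \<delta>. \<forall>y\<in>Y \<inter> cball yb \<delta>.
          f xb y \<le> f xb yb \<and>
          f xb yb \<le> maxval f x (Y \<inter> cball yb (\<tau> (norm (x - xb))))"
  proof (intro ballI conjI)
    fix \<delta> x y assume \<delta>: "\<delta> \<in> {0<..\<delta>0}" and x: "x \<in> X \<inter> cball xb \<delta>" and y: "y \<in> Y \<inter> cball yb \<delta>"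
    show "f xb y \<le> f xb yb" using lm \<delta> x y unfolding local_minimax_wrt_def by blast
    show "f xb yb \<le> maxval f x (Y \<inter> cball yb (\<tau> (norm (x - xb))))"
    proof (cases "x = xb")
      case True
      have "Y \<inter> cball yb 0 = {yb}" using assms(7) by auto
      then show ?thesis using True t0 by (simp add: maxval_def)
    next
      case False
      define d where "d = norm (x - xb)"
      have dp: "d > 0" using False d_def by auto
      have "d \<le> \<delta>" using x by (simp add: d_def dist_norm norm_minus_commute)
      then have "d \<in> {0<..\<delta>0}" using dp \<delta> by auto
      moreover have "x \<in> X \<inter> cball xb d" using x by (simp add: d_def dist_norm norm_minus_commute)
      moreover have "yb \<in> Y \<inter> cball yb d" using assms(7) dp by auto
      ultimately show ?thesis using lm unfolding local_minimax_wrt_def d_def by blast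
    qed
  qed
  have P2: "inner_calm (\<lambda>x. argmax_set f x (Y \<inter> cball yb (\<tau> (norm (x - xb))))) xb yb X"
    unfolding inner_calm_def
  proof (intro conjI)
    show "yb \<in> argmax_set f xb (Y \<inter> cball yb (\<tau> (norm (xb - xb))))"
      using t0 assms(7) by (auto simp: argmax_set_def)
  next
    have "\<forall>x\<in>cball xb \<delta>1 \<inter> X. yb \<in> {y + z |y z. y \<in> argmax_set f x (Y \<inter> cball yb (\<tau> (norm (x - xb)))) \<and> z \<in> cball 0 (\<kappa> * norm (x - xb))}"
    proof
    fix x assume x: "x \<in> cball xb \<delta>1 \<inter> X"
    define d where "d = norm (x - xb)"
    have d: "d \<ge> 0" "d \<le> \<delta>1" using x by (auto simp: d_def dist_norm norm_minus_commute)
    obtain y where y: "y \<in> argmax_set f x (Y \<inter> cball yb (\<tau> d))"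
      using assms(5) x assms(7) tpos[OF d(1)] unfolding max_attained_def by blast
    have "norm (yb - y) \<le> \<tau> d" using y by (auto simp: argmax_set_def dist_norm)
    also have "\<dots> \<le> \<kappa> * d" using hk d by auto
    finally have "yb - y \<in> cball 0 (\<kappa> * d)" by (simp add: dist_norm norm_minus_commute)
    then show "yb \<in> {y + z |y z. y \<in> argmax_set f x (Y \<inter> cball yb (\<tau> (norm (x - xb)))) \<and> z \<in> cball 0 (\<kappa> * norm (x - xb))}"
      using y unfolding d_def by (intro CollectI exI[of _ y] exI[of _ "yb - y"]) auto
    qed
    then show "\<exists>\<kappa>>0. \<exists>\<delta>0>0. \<forall>x\<in>cball xb \<delta>0 \<inter> X. yb \<in> {y + z |y z. y \<in> argmax_set f x (Y \<inter> cball yb (\<tau> (norm (x - xb)))) \<and> z \<in> cball 0 (\<kappa> * norm (x - xb))}"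
      using k d1 by blast
  qed
  show "\<exists>\<delta>0>0. \<exists>\<tau>. radius_function \<tau> \<and>
       (\<forall>\<delta>\<in>{0<..\<delta>0}. \<forall>x\<in>X \<inter> cball xb \<delta>. \<forall>y\<in>Y \<inter> cball yb \<delta>.
          f xb y \<le> f xb yb \<and>
          f xb yb \<le> maxval f x (Y \<inter> cball yb (\<tau> (norm (x - xb))))) \<and>
       inner_calm (\<lambda>x. argmax_set f x (Y \<inter> cball yb (\<tau> (norm (x - xb))))) xb yb X"
    using d0 rf P1 P2 by blast
next
  assume "\<exists>\<delta>0>0. \<exists>\<tau>. radius_function \<tau> \<and>
       (\<forall>\<delta>\<in>{0<..\<delta>0}. \<forall>x\<in>X \<inter> cball xb \<delta>. \<forall>y\<in>Y \<inter> cball yb \<delta>.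
          f xb y \<le> f xb yb \<and>
          f xb yb \<le> maxval f x (Y \<inter> cball yb (\<tau> (norm (x - xb))))) \<and>
       inner_calm (\<lambda>x. argmax_set f x (Y \<inter> cball yb (\<tau> (norm (x - xb))))) xb yb X"
  then obtain \<delta>0 \<tau> where d0: "\<delta>0 > 0" and
    P1: "\<forall>\<delta>\<in>{0<..\<delta>0}. \<forall>x\<in>X \<inter> cball xb \<delta>. \<forall>y\<in>Y \<inter> cball yb \<delta>.
          f xb y \<le> f xb yb \<and>
          f xb yb \<le> maxval f x (Y \<inter> cball yb (\<tau> (norm (x - xb))))" and
    ic: "inner_calm (\<lambda>x. argmax_set f x (Y \<inter> cball yb (\<tau> (norm (x - xb))))) xb yb X"
    by blast
  from ic obtain \<kappa> \<delta>1 where k: "\<kappa> > 0" and d1: "\<delta>1 > 0" and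
    hic: "\<forall>x\<in>cball xb \<delta>1 \<inter> X. yb \<in> {y + z |y z. y \<in> argmax_set f x (Y \<inter> cball yb (\<tau> (norm (x - xb)))) \<and> z \<in> cball 0 (\<kappa> * norm (x - xb))}"
    unfolding inner_calm_def by blast
  define \<tau>' where "\<tau>' = (\<lambda>d::real. \<kappa> * d)"
  have rf: "radius_function \<tau>'"
    unfolding radius_function_def \<tau>'_def using k
    by (auto intro!: tendsto_eq_intros)
  have cl: "calm_at_0 \<tau>'"
    unfolding calm_at_0_def \<tau>'_def using k by (intro exI[of _ \<kappa>] exI[of _ 1]) auto
  have lm: "local_minimax_wrt X Y f xb yb (min \<delta>0 \<delta>1) \<tau>'"
    unfolding local_minimax_wrt_def
  proof (intro ballI conjI)
    fix \<delta> x y assume \<delta>: "\<delta> \<in> {0<..min \<delta>0 \<delta>1}" and x: "x \<in> X \<inter> cball xb \<delta>" and y: "y \<in> Y \<inter> cball yb \<delta>"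
    have \<delta>0: "\<delta> \<in> {0<..\<delta>0}" using \<delta> by auto
    show "f xb y \<le> f xb yb" using P1 \<delta>0 x y by blast
    have a: "f xb yb \<le> maxval f x (Y \<inter> cball yb (\<tau> (norm (x - xb))))" using P1 \<delta>0 x y by blast
    have xd: "norm (x - xb) \<le> \<delta>" using x by (simp add: dist_norm norm_minus_commute)
    have "x \<in> cball xb \<delta>1 \<inter> X" using x \<delta> by auto
    with hic obtain y1 z where y1: "y1 \<in> argmax_set f x (Y \<inter> cball yb (\<tau> (norm (x - xb))))"
      and z: "z \<in> cball 0 (\<kappa> * norm (x - xb))" and e: "yb = y1 + z" by blast
    have m1: "maxval f x (Y \<inter> cball yb (\<tau> (norm (x - xb)))) = f x y1" using maxval_argmax[OF y1] .
    have "norm z \<le> \<kappa> * \<delta>" using z xd k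
      by (smt (verit, best) mem_cball_0 mult_left_mono)
    then have y1B: "y1 \<in> Y \<inter> cball yb (\<tau>' \<delta>)" using y1 e
      by (auto simp: argmax_set_def \<tau>'_def dist_norm)
    obtain y2 where y2: "y2 \<in> argmax_set f x (Y \<inter> cball yb (\<tau>' \<delta>))"
      using assms(5) x assms(7) k \<delta> unfolding max_attained_def \<tau>'_def
      by (metis IntD1 less_eq_real_def mult_pos_pos ex_in_conv greaterThanAtMost_iff)
    have "f x y1 \<le> f x y2" using y2 y1B by (auto simp: argmax_set_def)
    also have "\<dots> = maxval f x (Y \<inter> cball yb (\<tau>' \<delta>))" using maxval_argmax[OF y2] by simp
    finally show "f xb yb \<le> maxval f x (Y \<inter> cball yb (\<tau>' \<delta>))" using a m1 by simp
  qed
  show "calm_local_minimax_point X Y f xb yb"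
    unfolding calm_local_minimax_point_def using assms(6,7) rf cl lm d0 d1
    by (intro conjI exI[of _ "min \<delta>0 \<delta>1"] exI[of _ \<tau>']) auto
qed

end
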